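(* Let $\mathcal B$ be a binomial class of reluctant functions and suppose there is a delta operator $\mathfrak d$ on $\mathbb Q[x]$ whose basic sequence $(p_n(x))_{n\ge0}$ satisfies $|F(S,X)|=p_n(|X|)$ whenever $|S|=n$ (for all finite disjoint $S,X$). Let $x$ be a positive integer, $n\ge0$, and $\mathcal Z=(z_i)_{i\ge0}$ a sequence of integers with $1\le z_0\le z_1\le\cdots\le z_{n-1}\le x$ (the remaining terms arbitrary). Then $$ord(z_0,\dots,z_{n-1})=t_n\big(x;\mathfrak d,(x-z_i)_{i\ge0}\big)=t_n\big(0;\mathfrak d,(-z_i)_{i\ge0}\big),$$ i.e. $t_n(0;\mathfrak d,-\mathcal Z)$ counts the reluctant functions in $\mathcal B$ from an $n$-element set to $\{1,\dots,x\}$ whose order statistics are bounded by $\mathcal Z$.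
   Context: For finite disjoint sets $S,X$, a reluctant function from $S$ to $X$ is a map $f:S\to S\cup X$ such that for every $s\in S$ some iterate $f^k(s)$, $k\ge1$, lies in $X$; this element is the final image of $s$. A binomial class $\mathcal B$ assigns to each pair $(S,X)$ of finite disjoint sets a set $F(S,X)$ of reluctant functions from $S$ to $X$, compatible with bijections of $S$ and $X$, such that for disjoint $X,Y$ the map $f\mapsto(f_A,f_{S\setminus A})$ ($A$ = elements whose final image is in $X$; restrictions) is a bijection from $F(S,X\cup Y)$ onto $\bigsqcup_{A\subseteq S}F(A,X)\times F(S\setminus A,Y)$. For $S=\{s_0,\dots,s_{n-1}\}$, $X=\{1,\dots,x\}$, $f\in F(S,X)$, let $x_i$ be the final image of $s_i$ and $x_{(0)}\le\cdots\le x_{(n-1)}$ its nondecreasing rearrangement; $ord(z_0,\dots,z_{n-1})$ is the number of $f\in F(S,X)$ with $x_{(j)}\le z_j$ for all $j$. A delta operator is a linear operator $\mathfrak d$ on $\mathbb Q[x]$ commuting with all shifts $f(x)\mapsto f(x+a)$ and with $\mathfrak d(x)$ a nonzero constant; its basic sequence is the unique $(p_n)$ with $\deg p_n=n$, $p_0=1$, $p_n(0)=0$ ($n\ge1$), $\mathfrak dp_n=np_{n-1}$. $t_n(x;\mathfrak d,\mathcal W)$ denotes the $n$-th term of the generalized Gončarov basis associated with $(\mathfrak d,\mathcal W)$ for a sequence $\mathcal W=(w_i)_{i\ge0}$: the unique sequence $(t_n)_{n\ge0}$ with $\deg t_n=n$ and $\mathfrak d^{\,i}(t_n)$ evaluated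 at $w_i$ equal to $n!\,\delta_{i,n}$ for all $i,n$. *)

theory Defs
  imports "HOL-Library.FuncSet" "HOL-Computational_Algebra.Polynomial"
begin

text \<open>Universe of finite sets: finite subsets of nat. Maps are extensional
  (value undefined outside the domain S).\<close>

definition reluctant :: "nat set \<Rightarrow> nat set \<Rightarrow> (nat \<Rightarrow> nat) \<Rightarrow> bool" where
  "reluctant S X f \<longleftrightarrow> f \<in> S \<rightarrow>\<^sub>E S \<union> X \<and> (\<forall>s\<in>S. \<exists>k\<ge>1. (f ^^ k) s \<in> X)"

definition final_image :: "(nat \<Rightarrow> nat) \<Rightarrow> nat set \<Rightarrow> nat \<Rightarrow> nat" where
  "final_image f X s = (f ^^ (LEAST k. k \<ge> 1 \<and> (f ^^ k) s \<in> X)) s"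

definition binomial_class :: "(nat set \<Rightarrow> nat set \<Rightarrow> (nat \<Rightarrow> nat) set) \<Rightarrow> bool" where
  "binomial_class F \<longleftrightarrow>
    (\<forall>S X. finite S \<and> finite X \<and> S \<inter> X = {} \<longrightarrow> (\<forall>f\<in>F S X. reluctant S X f)) \<and>
    (\<forall>S X S' X' \<phi>. finite S \<and> finite X \<and> S \<inter> X = {} \<and> finite S' \<and> finite X' \<and> S' \<inter> X' = {}
        \<and> bij_betw \<phi> S S' \<and> bij_betw \<phi> X X' \<longrightarrow>
        F S' X' = (\<lambda>f. restrict (\<phi> \<circ> f \<circ> inv_into S \<phi>) S') ` F S X) \<and>
    (\<forall>S X Y. finite S \<and> finite X \<and> finite Y \<and> S \<inter> X = {} \<and> S \<inter> Y = {} \<and> X \<inter> Y = {} \<longrightarrow>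
        bij_betw (\<lambda>f. let A = {s\<in>S. final_image f (X \<union> Y) s \<in> X}
                       in (A, restrict f A, restrict f (S - A)))
          (F S (X \<union> Y)) (SIGMA A:Pow S. F A X \<times> F (S - A) Y))"

definition delta_operator :: "(rat poly \<Rightarrow> rat poly) \<Rightarrow> bool" where
  "delta_operator d \<longleftrightarrow>
    (\<forall>p q. d (p + q) = d p + d q) \<and> (\<forall>c p. d (smult c p) = smult c (d p)) \<and>
    (\<forall>a p. d (pcompose p [:a, 1:]) = pcompose (d p) [:a, 1:]) \<and>
    (\<exists>c. c \<noteq> 0 \<and> d [:0, 1:] = [:c:])"

definition basic_sequence :: "(rat poly \<Rightarrow> rat poly) \<Rightarrow> (nat \<Rightarrow> rat poly) \<Rightarrow> bool" where
  "basic_sequence d p \<longleftrightarrow>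
    (\<forall>n. degree (p n) = n) \<and> p 0 = 1 \<and> (\<forall>n\<ge>1. poly (p n) 0 = 0) \<and>
    (\<forall>n\<ge>1. d (p n) = smult (of_nat n) (p (n - 1)))"

definition goncarov_basis :: "(rat poly \<Rightarrow> rat poly) \<Rightarrow> (nat \<Rightarrow> rat) \<Rightarrow> nat \<Rightarrow> rat poly" where
  "goncarov_basis d w = (THE t. \<forall>n. degree (t n) = n \<and>
      (\<forall>i. poly ((d ^^ i) (t n)) (w i) = (if i = n then fact n else 0)))"

definition ord_count :: "(nat set \<Rightarrow> nat set \<Rightarrow> (nat \<Rightarrow> nat) set) \<Rightarrow> nat set \<Rightarrow> nat set
    \<Rightarrow> (nat \<Rightarrow> int) \<Rightarrow> nat" where
  "ord_count F S X z = card {f \<in> F S X. \<forall>j < card S.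
      int (sort (map (final_image f X) (sorted_list_of_set S)) ! j) \<le> z j}"

end

theory Submission
  imports Defs
begin

lemma d_add: "delta_operator d \<Longrightarrow> d (a + b) = d a + d b"
  by (simp add: delta_operator_def)
lemma d_smult: "delta_operator d \<Longrightarrow> d (smult c a) = smult c (d a)"
  by (simp add: delta_operator_def)
lemma d_shift: "delta_operator d \<Longrightarrow> d (pcompose q [:a, 1:]) = pcompose (d q) [:a, 1:]"
  by (simp add: delta_operator_def)
lemma d_zero: "delta_operator d \<Longrightarrow> d 0 = 0"
  using d_add[of d 0 0] by simp
lemma d_diff: "delta_operator d \<Longrightarrow> d (a - b) = d a - d b"
  using d_add[of d "a - b" b] by simp
lemma d_one: assumes "delta_operator d" shows "d 1 = 0"
proof -
  obtain c where c: "d [:0,1:] = [:c:]" using assms by (auto simp: delta_operator_def)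
  have "d (pcompose [:0,1:] [:1,1:]) = pcompose (d [:0,1:]) [:1,1:]" by (rule d_shift[OF assms])
  moreover have "pcompose [:0,1:] [:1,1:] = [:0,1:] + (1::rat poly)"
    by (simp add: pcompose_pCons one_pCons)
  ultimately have "d [:0,1:] + d 1 = [:c:]" using c d_add[OF assms] by simp
  with c show ?thesis by simp
qed
lemma d_const: assumes "delta_operator d" shows "d [:c:] = 0"
proof -
  have "[:c:] = smult c (1::rat poly)" by simp
  then show ?thesis using d_smult[OF assms, of c 1] d_one[OF assms] by simp
qed

lemma dk_add: "delta_operator d \<Longrightarrow> (d^^k) (a + b) = (d^^k) a + (d^^k) b"
  by (induction k) (auto simp: d_add)
lemma dk_smult: "delta_operator d \<Longrightarrow> (d^^k) (smult c a) = smult c ((d^^k) a)"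
  by (induction k) (auto simp: d_smult)
lemma dk_diff: "delta_operator d \<Longrightarrow> (d^^k) (a - b) = (d^^k) a - (d^^k) b"
  by (induction k) (auto simp: d_diff)
lemma dk_zero: "delta_operator d \<Longrightarrow> (d^^k) 0 = 0"
  by (induction k) (auto simp: d_zero)
lemma dk_sum: "delta_operator d \<Longrightarrow> (d^^k) (\<Sum>i\<in>A. f i) = (\<Sum>i\<in>A. (d^^k) (f i))"
  by (induction A rule: infinite_finite_induct) (auto simp: dk_zero dk_add)
lemma dk_shift: "delta_operator d \<Longrightarrow> (d^^k) (pcompose q [:a, 1:]) = pcompose ((d^^k) q) [:a, 1:]"
  by (induction k) (auto simp: d_shift)

lemma d_degree:
  assumes D: "delta_operator d" and B: "basic_sequence d p"
  shows "degree (d q) = degree q - 1 \<and> (degree q = 0 \<longrightarrow> d q = 0) \<and> (degree q \<ge> 1 \<longrightarrow> d q \<noteq> 0)"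
proof (induction "degree q" arbitrary: q rule: less_induct)
  case less
  show ?case
  proof (cases "degree q = 0")
    case True
    then have "q = [:coeff q 0:]" using True by (metis degree_0_id)
    then have "d q = 0" using d_const[OF D] by metis
    then show ?thesis using True by simp
  next
    case False
    define m where "m = degree q"
    have pm: "degree (p m) = m" using B by (simp add: basic_sequence_def)
    have dpm: "d (p m) = smult (of_nat m) (p (m - 1))" using B False by (simp add: basic_sequence_def m_def)
    have pm1: "degree (p (m - 1)) = m - 1" using B by (simp add: basic_sequence_def)
    have pm0: "p m \<noteq> 0" using pm False m_def by auto
    define c where "c = lead_coeff q / lead_coeff (p m)"
    have q0: "q \<noteq> 0" using False by auto
    have c0: "c \<noteq> 0" using q0 pm0 by (simp add: c_def)
    define r where "r = q - smult c (p m)"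
    have lc: "coeff (p m) m \<noteq> 0" using pm0 pm by (metis leading_coeff_0_iff)
    have e1: "coeff r m = coeff q m - c * coeff (p m) m" by (simp add: r_def)
    have e2: "lead_coeff (p m) = coeff (p m) m" using pm by simp
    have "coeff r m = 0" unfolding e1 c_def e2 using lc by (simp add: m_def)
    moreover have "degree r \<le> m" unfolding r_def using pm by (intro degree_diff_le) (auto simp: m_def)
    ultimately have rm: "degree r < m"
      proof (cases "r = 0")
      case True then show ?thesis using False m_def by simp
    next
      case r0: False
      then have "coeff r (degree r) \<noteq> 0" by simp
      then have "degree r \<noteq> m" using \<open>coeff r m = 0\<close> by auto
      then show ?thesis using \<open>degree r \<le> m\<close> by simp
    qed
    have IH: "degree (d r) = degree r - 1 \<and> (degree r = 0 \<longrightarrow> d r = 0)"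
      using less rm m_def by blast
    have qeq: "q = smult c (p m) + r" by (simp add: r_def)
    have dq: "d q = smult (c * of_nat m) (p (m - 1)) + d r"
      using qeq d_add[OF D] d_smult[OF D] dpm by simp
    have deg1: "degree (smult (c * of_nat m) (p (m - 1))) = m - 1"
      using c0 False m_def pm1 by simp
    have ne1: "smult (c * of_nat m) (p (m - 1)) \<noteq> 0"
    proof
      assume "smult (c * of_nat m) (p (m - 1)) = 0"
      then have "p (m - 1) = 0" using c0 False m_def by simp
      moreover have "p 0 = 1" using B by (simp add: basic_sequence_def)
      moreover have "m - 1 = 0" using \<open>p (m - 1) = 0\<close> pm1 by simp
      ultimately show False by simp
    qed
    show ?thesis
    proof (cases "m = 1")
      case True
      then have "d r = 0" using IH rm by simp
      then show ?thesis using dq deg1 ne1 m_def True by simp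
    next
      case m1: False
      have "degree (d r) < m - 1" using IH rm m1 False m_def by linarith
      then have "degree (d q) = m - 1" unfolding dq using deg1
        by (subst degree_add_eq_left) auto
      then show ?thesis using m_def m1 False by auto
    qed
  qed
qed

lemma dk_degree:
  assumes D: "delta_operator d" and B: "basic_sequence d p"
  shows "degree ((d^^k) q) = degree q - k"
  by (induction k) (auto simp: d_degree[OF D B])

lemma dk_vanish:
  assumes D: "delta_operator d" and B: "basic_sequence d p"
  shows "degree q < k \<Longrightarrow> (d^^k) q = 0"
proof (induction k)
  case 0 then show ?case by simp
next
  case (Suc k)
  show ?case
  proof (cases "degree q < k")
    case True then show ?thesis using Suc by (simp add: d_zero[OF D])
  next
    case False
    then have "degree ((d^^k) q) = 0" using dk_degree[OF D B] Suc by simp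
    then show ?thesis using d_degree[OF D B] by simp
  qed
qed

lemma dk_nonzero:
  assumes D: "delta_operator d" and B: "basic_sequence d p"
  shows "q \<noteq> 0 \<Longrightarrow> k \<le> degree q \<Longrightarrow> (d^^k) q \<noteq> 0"
proof (induction k)
  case 0 then show ?case by simp
next
  case (Suc k)
  then have "(d^^k) q \<noteq> 0" by simp
  moreover have "degree ((d^^k) q) \<ge> 1" using dk_degree[OF D B] Suc by simp
  ultimately show ?case using d_degree[OF D B] by simp
qed

lemma uniq0:
  assumes D: "delta_operator d" and B: "basic_sequence d p"
    and "degree q \<le> n" and "\<forall>i\<le>n. poly ((d^^i) q) (w i) = 0"
  shows "q = 0"
proof (rule ccontr)
  assume q0: "q \<noteq> 0"
  define r where "r = (d^^(degree q)) q"
  have "r \<noteq> 0" using dk_nonzero[OF D B q0] by (simp add: r_def)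
  moreover have "degree r = 0" using dk_degree[OF D B] by (simp add: r_def)
  ultimately obtain c where "r = [:c:]" "c \<noteq> 0" by (metis degree_0_id pCons_0_0)
  moreover have "poly r (w (degree q)) = 0" using assms(3,4) by (simp add: r_def)
  ultimately show False by simp
qed

lemma fact_step: "j < n \<Longrightarrow> (fact n / fact (n - j) :: rat) * of_nat (n - j) = fact n / fact (n - Suc j)"
proof -
  assume jn: "j < n"
  define a where "a = (of_nat (n - j) :: rat)"
  have a0: "a \<noteq> 0" using jn by (simp add: a_def)
  have eq: "(fact (n - j) :: rat) = a * fact (n - Suc j)"
    unfolding a_def using jn by (metis Suc_diff_Suc fact_Suc of_nat_fact of_nat_mult)
  show ?thesis unfolding a_def[symmetric] eq using a0 by simp
qed

lemma dk_p:
  assumes D: "delta_operator d" and B: "basic_sequence d p"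
  shows "j \<le> n \<Longrightarrow> (d^^j) (p n) = smult (fact n / fact (n - j)) (p (n - j))"
proof (induction j)
  case 0 then show ?case by simp
next
  case (Suc j)
  have "n - j \<ge> 1" using Suc by simp
  then have "d (p (n - j)) = smult (of_nat (n - j)) (p (n - j - 1))"
    using B unfolding basic_sequence_def by blast
  then have dp: "d (p (n - j)) = smult (of_nat (n - j)) (p (n - Suc j))" by simp
  have "(d^^Suc j) (p n) = d ((d^^j) (p n))" by simp
  also have "\<dots> = smult (fact n / fact (n - j)) (d (p (n - j)))"
    using Suc by (simp add: d_smult[OF D])
  also have "\<dots> = smult (fact n / fact (n - j) * of_nat (n - j)) (p (n - Suc j))"
    by (simp add: dp)
  also have "\<dots> = smult (fact n / fact (n - Suc j)) (p (n - Suc j))"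
    using fact_step[of j n] Suc by simp
  finally show ?case .
qed

fun gT :: "(nat \<Rightarrow> rat poly) \<Rightarrow> (nat \<Rightarrow> rat) \<Rightarrow> nat \<Rightarrow> rat poly" where
  "gT p w n = p n - (\<Sum>i<n. smult (of_nat (n choose i) * poly (p (n - i)) (w i)) (gT p w i))"

declare gT.simps[simp del]

lemma deg_sum_lt: "(\<And>i. i < (n::nat) \<Longrightarrow> degree (f i) \<le> m) \<Longrightarrow> degree (\<Sum>i<n. f i) \<le> m"
proof (induction n)
  case 0 then show ?case by simp
next
  case (Suc n)
  then have "degree (\<Sum>i<n. f i) \<le> m" "degree (f n) \<le> m" by auto
  then show ?case by (simp add: degree_add_le)
qed

lemma gT_prop:
  assumes D: "delta_operator d" and B: "basic_sequence d p"
  shows "degree (gT p w n) = n \<and> (\<forall>j. poly ((d^^j) (gT p w n)) (w j) = (if j = n then fact n else 0))"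
proof (induction n rule: less_induct)
  case (less n)
  define c where "c i = of_nat (n choose i) * poly (p (n - i)) (w i)" for i
  define S where "S = (\<Sum>i<n. smult (c i) (gT p w i))"
  have gn: "gT p w n = p n - S" unfolding S_def c_def by (subst gT.simps) simp
  have pn: "degree (p n) = n" using B by (simp add: basic_sequence_def)
  have degn: "degree (gT p w n) = n"
  proof (cases "n = 0")
    case True then show ?thesis unfolding gn S_def using pn by simp
  next
    case False
    have "degree S \<le> n - 1" unfolding S_def
    proof (rule deg_sum_lt)
      fix i assume "i < n"
      then have "degree (gT p w i) = i" using less by blast
      then show "degree (smult (c i) (gT p w i)) \<le> n - 1" using \<open>i < n\<close>
        by (metis degree_smult_le le_diff_conv2 le_trans less_Suc_eq_le Suc_leI One_nat_def le_add_diff_inverse plus_1_eq_Suc False neq0_conv)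
    qed
    then have "degree (- S) < degree (p n)" using pn False by simp
    then show ?thesis unfolding gn using pn
      by (metis diff_conv_add_uminus degree_add_eq_left)
  qed
  have vals: "poly ((d^^j) (gT p w n)) (w j) = (if j = n then fact n else 0)" for j
  proof -
    have IH: "\<And>i. i < n \<Longrightarrow> poly ((d^^j) (gT p w i)) (w j) = (if j = i then fact i else 0)"
      using less by blast
    have "(d^^j) (gT p w n) = (d^^j) (p n) - (\<Sum>i<n. smult (c i) ((d^^j) (gT p w i)))"
      unfolding gn S_def by (simp add: dk_diff[OF D] dk_sum[OF D] dk_smult[OF D])
    then have e: "poly ((d^^j) (gT p w n)) (w j) = poly ((d^^j) (p n)) (w j)
        - (\<Sum>i<n. c i * (if j = i then fact i else 0))"
      by (simp add: poly_sum IH)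
    show ?thesis
    proof (cases "j < n")
      case True
      have s: "(\<Sum>i<n. c i * (if j = i then fact i else 0)) = c j * fact j"
        using True by (simp add: if_distrib[of "\<lambda>x. c _ * x"] sum.delta cong: if_cong)
      have "poly ((d^^j) (p n)) (w j) = fact n / fact (n - j) * poly (p (n - j)) (w j)"
        using dk_p[OF D B, of j n] True by simp
      moreover have "c j * fact j = fact n / fact (n - j) * poly (p (n - j)) (w j)"
      proof -
        have "c j * fact j = (fact j * of_nat (n choose j)) * poly (p (n - j)) (w j)"
          unfolding c_def by (simp add: algebra_simps)
        also have "\<dots> = fact n / fact (n - j) * poly (p (n - j)) (w j)"
          using fact_binomial[of j n, where 'a=rat] True by simp
        finally show ?thesis .
      qed
      ultimately show ?thesis using e s True by simp
    next
      case False
      show ?thesis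
      proof (cases "j = n")
        case True
        have "(\<Sum>i<n. c i * (if j = i then fact i else 0)) = 0" using True by simp
        moreover have "(d^^j) (p n) = smult (fact n) 1"
          using dk_p[OF D B, of j n] True B by (simp add: basic_sequence_def)
        ultimately show ?thesis using e True by simp
      next
        case jn: False
        then have "(d^^j) (gT p w n) = 0" using False degn dk_vanish[OF D B] by simp
        then show ?thesis using jn by simp
      qed
    qed
  qed
  show ?case using degn vals by blast
qed

lemma gb_unique:
  assumes D: "delta_operator d" and B: "basic_sequence d p"
    and t: "\<forall>n. degree (t n) = n \<and> (\<forall>i. poly ((d ^^ i) (t n)) (w i) = (if i = n then fact n else 0))"
  shows "goncarov_basis d w = t"
  unfolding goncarov_basis_def
proof (rule the_equality)
  show "\<forall>n. degree (t n) = n \<and> (\<forall>i. poly ((d ^^ i) (t n)) (w i) = (if i = n then fact n else 0))" by (rule t)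
next
  fix t' assume t': "\<forall>n. degree (t' n) = n \<and> (\<forall>i. poly ((d ^^ i) (t' n)) (w i) = (if i = n then fact n else 0))"
  show "t' = t"
  proof
    fix n
    have "t' n - t n = 0"
    proof (rule uniq0[OF D B])
      show "degree (t' n - t n) \<le> n" using t t' by (metis degree_diff_le order_refl)
      show "\<forall>i\<le>n. poly ((d ^^ i) (t' n - t n)) (w i) = 0"
        using t t' by (simp add: dk_diff[OF D])
    qed
    then show "t' n = t n" by simp
  qed
qed

lemma gb_gT:
  assumes D: "delta_operator d" and B: "basic_sequence d p"
  shows "goncarov_basis d w = gT p w"
  using gb_unique[OF D B] gT_prop[OF D B] by blast

lemma gb_shift:
  assumes D: "delta_operator d" and B: "basic_sequence d p"
  shows "goncarov_basis d (\<lambda>i. w i - a) n = pcompose (goncarov_basis d w n) [:a, 1:]"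
proof -
  have "goncarov_basis d (\<lambda>i. w i - a) = (\<lambda>n. pcompose (gT p w n) [:a, 1:])"
  proof (rule gb_unique[OF D B], intro allI conjI)
    fix n i
    show "degree (pcompose (gT p w n) [:a, 1:]) = n"
      using gT_prop[OF D B] by (simp add: degree_pcompose)
    show "poly ((d ^^ i) (pcompose (gT p w n) [:a, 1:])) (w i - a) = (if i = n then fact n else 0)"
      using gT_prop[OF D B, of w n] by (simp add: dk_shift[OF D] poly_pcompose)
  qed
  then show ?thesis using gb_gT[OF D B] by simp
qed

lemma sorted_nth_filter:
  fixes L :: "'a::linorder list"
  assumes "sorted L" "j < length L" "\<forall>a b. a \<le> b \<longrightarrow> P b \<longrightarrow> P a"
  shows "P (L ! j) \<longleftrightarrow> j < length (filter P L)"
  using assms(1,2)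
proof (induction L arbitrary: j)
  case Nil then show ?case by simp
next
  case (Cons a L)
  have ge: "\<forall>y\<in>set L. a \<le> y" and sL: "sorted L" using Cons.prems by auto
  show ?case
  proof (cases "P a")
    case True
    show ?thesis
    proof (cases j)
      case 0 then show ?thesis using True by simp
    next
      case (Suc j') then show ?thesis using True Cons.IH[OF sL, of j'] Cons.prems by simp
    qed
  next
    case False
    have nP: "\<forall>y\<in>set L. \<not> P y" using False ge assms(3) by blast
    then have "filter P (a # L) = []" using False by (simp add: filter_empty_conv)
    moreover have "\<not> P ((a # L) ! j)"
      using nP False Cons.prems by (cases j) auto
    ultimately show ?thesis by simp
  qed
qed

lemma length_filter_sort: "length (filter P (sort xs)) = length (filter P xs)"
  by (metis mset_filter mset_sort size_mset)

lemma length_filter_sl: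
  "finite S \<Longrightarrow> length (filter P (map v (sorted_list_of_set S))) = card {s\<in>S. P (v s)}"
proof -
  assume fS: "finite S"
  have "length (filter P (map v (sorted_list_of_set S))) = length (filter (P \<circ> v) (sorted_list_of_set S))"
    by (simp add: filter_map)
  also have "\<dots> = card (set (filter (P \<circ> v) (sorted_list_of_set S)))"
    by (intro distinct_card[symmetric] distinct_filter distinct_sorted_list_of_set)
  also have "\<dots> = card {s\<in>S. P (v s)}" by (simp only: set_filter set_sorted_list_of_set[OF fS] comp_def)
  finally show ?thesis .
qed

lemma sort_cond:
  assumes "finite S"
  shows "(\<forall>j<card S. int (sort (map v (sorted_list_of_set S)) ! j) \<le> z j)
     \<longleftrightarrow> (\<forall>j<card S. j < card {s\<in>S. int (v s) \<le> z j})"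
proof -
  let ?L = "sort (map v (sorted_list_of_set S))"
  have len: "length ?L = card S" by simp
  have "int (?L ! j) \<le> z j \<longleftrightarrow> j < card {s\<in>S. int (v s) \<le> z j}" if "j < card S" for j
  proof -
    have "int (?L ! j) \<le> z j \<longleftrightarrow> j < length (filter (\<lambda>y. int y \<le> z j) ?L)"
      by (rule sorted_nth_filter) (use that in auto)
    also have "\<dots> \<longleftrightarrow> j < card {s\<in>S. int (v s) \<le> z j}"
      by (simp only: length_filter_sort length_filter_sl[OF assms])
    finally show ?thesis .
  qed
  then show ?thesis by auto
qed

lemma fi_char:
  assumes "1 \<le> K" "(f^^K) s \<in> X" "\<forall>k. 1 \<le> k \<and> k < K \<longrightarrow> (f^^k) s \<notin> X"
  shows "final_image f X s = (f^^K) s"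
proof -
  have "(LEAST k. k \<ge> 1 \<and> (f ^^ k) s \<in> X) = K"
    by (rule Least_equality) (use assms in \<open>auto simp: not_less[symmetric]\<close>)
  then show ?thesis by (simp add: final_image_def)
qed

lemma reluctant_path:
  assumes R: "reluctant S X f" and s: "s \<in> S"
  defines "K \<equiv> LEAST k. k \<ge> 1 \<and> (f ^^ k) s \<in> X"
  shows "K \<ge> 1" "(f^^K) s \<in> X" "\<forall>k<K. (f^^k) s \<in> S"
    "\<forall>k. 1 \<le> k \<and> k < K \<longrightarrow> (f^^k) s \<notin> X" "final_image f X s = (f^^K) s"
proof -
  have ex: "\<exists>k. k \<ge> 1 \<and> (f ^^ k) s \<in> X" using R s by (auto simp: reluctant_def)
  show K1: "K \<ge> 1" and KX: "(f^^K) s \<in> X"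
    using LeastI_ex[OF ex] by (auto simp: K_def)
  show nX: "\<forall>k. 1 \<le> k \<and> k < K \<longrightarrow> (f^^k) s \<notin> X"
    unfolding K_def using not_less_Least by blast
  have fS: "f \<in> S \<rightarrow>\<^sub>E S \<union> X" using R by (simp add: reluctant_def)
  show "\<forall>k<K. (f^^k) s \<in> S"
  proof (intro allI impI)
    fix k assume "k < K"
    then show "(f^^k) s \<in> S"
    proof (induction k)
      case 0 then show ?case using s by simp
    next
      case (Suc k)
      then have "(f^^k) s \<in> S" by simp
      then have "(f^^Suc k) s \<in> S \<union> X" using fS by auto
      moreover have "(f^^Suc k) s \<notin> X" using nX[rule_format, of "Suc k"] Suc.prems by simp
      ultimately show ?case by simp
    qed
  qed
  show "final_image f X s = (f^^K) s" by (simp add: final_image_def K_def)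
qed

lemma fi_in: "reluctant S X f \<Longrightarrow> s \<in> S \<Longrightarrow> final_image f X s \<in> X"
  using reluctant_path(2,5) by metis

lemma fi_restrict:
  assumes R: "reluctant S X f" and SX: "S \<inter> X = {}" and BX: "B \<subseteq> X"
    and A: "A = {s\<in>S. final_image f X s \<in> B}" and s: "s \<in> A"
  shows "final_image (restrict f A) B s = final_image f X s"
proof -
  have sS: "s \<in> S" using s A by simp
  define K where "K = (LEAST k. k \<ge> 1 \<and> (f ^^ k) s \<in> X)"
  note P = reluctant_path[OF R sS, folded K_def]
  have inA: "(f^^k) s \<in> A" if "k < K" for k
  proof -
    have kS: "(f^^k) s \<in> S" using P(3) that by simp
    have "final_image f X ((f^^k) s) = (f^^(K - k)) ((f^^k) s)"
    proof (rule fi_char)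
      show "1 \<le> K - k" using that by simp
      have "(f^^(K - k)) ((f^^k) s) = (f^^K) s" using that
        by (metis funpow_add le_add_diff_inverse2 less_imp_le_nat comp_apply)
      then show "(f^^(K - k)) ((f^^k) s) \<in> X" using P(2) by simp
      show "\<forall>m. 1 \<le> m \<and> m < K - k \<longrightarrow> (f^^m) ((f^^k) s) \<notin> X"
      proof (intro allI impI)
        fix m assume m: "1 \<le> m \<and> m < K - k"
        have "(f^^m) ((f^^k) s) = (f^^(m + k)) s" by (simp add: funpow_add)
        then show "(f^^m) ((f^^k) s) \<notin> X" using P(4) m by auto
      qed
    qed
    also have "\<dots> = (f^^K) s" using that
      by (metis funpow_add le_add_diff_inverse2 less_imp_le_nat comp_apply)
    finally have "final_image f X ((f^^k) s) = final_image f X s" using P(5) by simp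
    then show ?thesis using kS s A by simp
  qed
  have same: "(restrict f A ^^ k) s = (f^^k) s" if "k \<le> K" for k
    using that
  proof (induction k)
    case 0 then show ?case by simp
  next
    case (Suc k)
    from Suc.prems have "k \<le> K" by simp
    then have ih: "(restrict f A ^^ k) s = (f^^k) s" by (rule Suc.IH)
    have kA: "(f^^k) s \<in> A" using inA Suc.prems by simp
    have "(restrict f A ^^ Suc k) s = restrict f A ((restrict f A ^^ k) s)"
      by (simp only: funpow.simps comp_apply)
    also have "\<dots> = f ((f^^k) s)" using kA by (simp only: ih restrict_apply' )
    also have "\<dots> = (f^^Suc k) s" by (simp only: funpow.simps comp_apply)
    finally show ?case .
  qed
  have "final_image (restrict f A) B s = (restrict f A ^^ K) s"
  proof (rule fi_char)
    show "1 \<le> K" by (rule P(1))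
    show "(restrict f A ^^ K) s \<in> B" using same[of K] P(5) s A by simp
    show "\<forall>k. 1 \<le> k \<and> k < K \<longrightarrow> (restrict f A ^^ k) s \<notin> B"
      using same P(3) SX BX by fastforce
  qed
  then show ?thesis using same[of K] P(5) by simp
qed

lemma F_rel:
  assumes "binomial_class F" "finite S" "finite X" "S \<inter> X = {}" "f \<in> F S X"
  shows "reluctant S X f"
proof -
  have c1: "\<forall>S X. finite S \<and> finite X \<and> S \<inter> X = {} \<longrightarrow> (\<forall>f\<in>F S X. reluctant S X f)"
    using assms(1) unfolding binomial_class_def by (rule conjunct1)
  then show ?thesis using assms(2-5) by simp
qed

lemma F_finite:
  assumes "binomial_class F" "finite S" "finite X" "S \<inter> X = {}"
  shows "finite (F S X)"
proof -
  have "F S X \<subseteq> S \<rightarrow>\<^sub>E S \<union> X" using F_rel[OF assms] unfolding reluctant_def by blast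
  moreover have "finite (S \<rightarrow>\<^sub>E S \<union> X)" using assms by (simp add: finite_PiE)
  ultimately show ?thesis by (rule finite_subset)
qed

lemma G_shift:
  assumes D: "delta_operator d" and B: "basic_sequence d p"
  shows "poly (goncarov_basis d (\<lambda>i. of_nat x - of_int (z i)) k) (of_nat x)
       = poly (goncarov_basis d (\<lambda>i. - of_int (z i)) k) 0"
proof -
  have "goncarov_basis d (\<lambda>i. (of_nat x - of_int (z i)) - of_nat x) k
      = pcompose (goncarov_basis d (\<lambda>i. of_nat x - of_int (z i)) k) [:of_nat x, 1:]"
    by (rule gb_shift[OF D B])
  moreover have "(\<lambda>i. (of_nat x - of_int (z i)) - (of_nat x::rat)) = (\<lambda>i. - of_int (z i))" by auto
  ultimately show ?thesis by (simp add: poly_pcompose)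
qed

lemma ord_count_alt:
  assumes "finite S"
  shows "ord_count F S X z = card {f \<in> F S X. \<forall>j<card S. j < card {s\<in>S. int (final_image f X s) \<le> z j}}"
  unfolding ord_count_def using sort_cond[OF assms] by simp

lemma tele:
  fixes U :: "'a set" and P :: "nat \<Rightarrow> 'a \<Rightarrow> bool"
  assumes "finite U"
  shows "card U = card {f\<in>U. \<forall>j<k. P j f} + (\<Sum>i<k. card {f\<in>U. (\<forall>j<i. P j f) \<and> \<not> P i f})"
proof (induction k)
  case 0 then show ?case by simp
next
  case (Suc k)
  have "{f\<in>U. \<forall>j<k. P j f} = {f\<in>U. \<forall>j<Suc k. P j f} \<union> {f\<in>U. (\<forall>j<k. P j f) \<and> \<not> P k f}"
    by (auto simp: less_Suc_eq)
  moreover have "card ({f\<in>U. \<forall>j<Suc k. P j f} \<union> {f\<in>U. (\<forall>j<k. P j f) \<and> \<not> P k f})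
     = card {f\<in>U. \<forall>j<Suc k. P j f} + card {f\<in>U. (\<forall>j<k. P j f) \<and> \<not> P k f}"
    by (rule card_Un_disjoint) (use assms in auto)
  ultimately show ?case using Suc by simp
qed

lemma Ek_card:
  fixes F :: "nat set \<Rightarrow> nat set \<Rightarrow> (nat \<Rightarrow> nat) set" and p :: "nat \<Rightarrow> rat poly"
    and z :: "nat \<Rightarrow> int" and G :: rat
  assumes BC: "binomial_class F"
    and H4: "\<forall>S' X. finite S' \<and> finite X \<and> S' \<inter> X = {} \<longrightarrow>
           of_nat (card (F S' X)) = poly (p (card S')) (of_nat (card X))"
    and fS: "finite S" and cS: "card S = n" and dis: "S \<inter> {1..x} = {}" and kn: "k < n"
    and zb: "\<forall>i<n. 1 \<le> z i \<and> z i \<le> int x"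
    and mono: "\<forall>i j. i \<le> j \<and> j < n \<longrightarrow> z i \<le> z j"
    and IH: "\<And>A. finite A \<Longrightarrow> card A = k \<Longrightarrow> A \<inter> {1..nat (z k)} = {} \<Longrightarrow>
              of_nat (ord_count F A {1..nat (z k)} z) = G"
  shows "(of_nat (card {f \<in> F S {1..x}. (\<forall>j<k. j < card {s\<in>S. int (final_image f {1..x} s) \<le> z j})
              \<and> \<not> k < card {s\<in>S. int (final_image f {1..x} s) \<le> z k}}) :: rat)
         = of_nat (n choose k) * G * poly (p (n - k)) (of_nat x - of_int (z k))"
proof -
  define X where "X = {1..x}"
  define zk where "zk = nat (z k)"
  define Xk where "Xk = {1..zk}"
  define Yk where "Yk = {Suc zk..x}"
  have zk1: "1 \<le> zk" and zkx: "zk \<le> x" and zkz: "int zk = z k" using zb kn by (auto simp: zk_def)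
  have XY: "Xk \<union> Yk = X" using zkx by (auto simp: Xk_def Yk_def X_def)
  have XkX: "Xk \<subseteq> X" using XY by auto
  have fX: "finite X" "finite Xk" "finite Yk" by (auto simp: X_def Xk_def Yk_def)
  have SX: "S \<inter> X = {}" using dis by (simp add: X_def)
  have SXk: "S \<inter> Xk = {}" "S \<inter> Yk = {}" "Xk \<inter> Yk = {}" using SX XY by (auto simp: Xk_def Yk_def)
  define V where "V f = final_image f X" for f
  define N where "N f c = card {s\<in>S. int (V f s) \<le> c}" for f c
  define Af where "Af f = {s\<in>S. V f s \<in> Xk}" for f
  define \<phi> where "\<phi> f = (Af f, restrict f (Af f), restrict f (S - Af f))" for f
  define \<Sigma> where "\<Sigma> = (SIGMA A:Pow S. F A Xk \<times> F (S - A) Yk)"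
  have c3: "\<forall>S X Y. finite S \<and> finite X \<and> finite Y \<and> S \<inter> X = {} \<and> S \<inter> Y = {} \<and> X \<inter> Y = {} \<longrightarrow>
        bij_betw (\<lambda>f. let A = {s\<in>S. final_image f (X \<union> Y) s \<in> X}
                       in (A, restrict f A, restrict f (S - A)))
          (F S (X \<union> Y)) (SIGMA A:Pow S. F A X \<times> F (S - A) Y)"
    using BC unfolding binomial_class_def by (rule conjunct2[THEN conjunct2])
  have bij: "bij_betw \<phi> (F S X) \<Sigma>"
    using c3[rule_format, of S Xk Yk] fS fX SXk
    unfolding XY Let_def \<phi>_def Af_def V_def \<Sigma>_def by simp
  have R: "reluctant S X f" if "f \<in> F S X" for f using F_rel[OF BC fS fX(1) SX that] .
  have Vin: "V f s \<in> X" if "f \<in> F S X" "s \<in> S" for f s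
    using fi_in[OF R[OF that(1)] that(2)] by (simp add: V_def)
  have K2: "Af f = {s\<in>S. int (V f s) \<le> z k}" if "f \<in> F S X" for f
    using Vin[OF that] zkz by (auto simp: Af_def Xk_def X_def)
  have K3: "card (Af f) = N f (z k)" if "f \<in> F S X" for f
    using K2[OF that] by (simp add: N_def)
  have K4: "card {s\<in>Af f. int (final_image (restrict f (Af f)) Xk s) \<le> z j} = N f (z j)"
    if f: "f \<in> F S X" and zj: "z j \<le> z k" for f j
  proof -
    have "{s\<in>Af f. int (final_image (restrict f (Af f)) Xk s) \<le> z j} = {s\<in>Af f. int (V f s) \<le> z j}"
      using fi_restrict[OF R[OF f] SX XkX, of "Af f"] by (auto simp: Af_def V_def)
    also have "\<dots> = {s\<in>S. int (V f s) \<le> z j}"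
    proof -
      have tr: "\<And>a. a \<le> z j \<Longrightarrow> a \<le> z k" using zj by simp
      show ?thesis by (subst K2[OF f]) (use tr in blast)
    qed
    finally show ?thesis by (simp add: N_def)
  qed
  define Ok where "Ok A = {g \<in> F A Xk. \<forall>j<k. j < card {s\<in>A. int (final_image g Xk s) \<le> z j}}" for A
  define \<A> where "\<A> = {A. A \<subseteq> S \<and> card A = k}"
  define T where "T = (SIGMA A:\<A>. Ok A \<times> F (S - A) Yk)"
  define E where "E = {f \<in> F S X. (\<forall>j<k. j < N f (z j)) \<and> \<not> k < N f (z k)}"
  have zmono: "z j \<le> z k" if "j < k" for j using mono kn that by auto
  have TS: "T \<subseteq> \<Sigma>" by (auto simp: T_def \<Sigma>_def Ok_def \<A>_def)
  have imgE: "\<phi> ` E = T"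
  proof
    show "\<phi> ` E \<subseteq> T"
    proof
      fix y assume "y \<in> \<phi> ` E"
      then obtain f where fE: "f \<in> E" and y: "y = \<phi> f" by auto
      have f: "f \<in> F S X" using fE by (simp add: E_def)
      have yS: "\<phi> f \<in> \<Sigma>" using bij f by (rule bij_betw_apply)
      have le: "N f (z k) \<le> k" using fE by (simp add: E_def)
      have ge: "k \<le> N f (z k)"
      proof (cases k)
        case 0 then show ?thesis by simp
      next
        case (Suc k')
        have "k' < N f (z k')" using fE Suc by (simp add: E_def)
        moreover have "N f (z k') \<le> N f (z k)" unfolding N_def
          using zmono[of k'] Suc fS by (intro card_mono) auto
        ultimately show ?thesis using Suc by simp
      qed
      have cA: "card (Af f) = k" using K3[OF f] le ge by simp
      have "restrict f (Af f) \<in> Ok (Af f)"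
        using yS fE K4[OF f] zmono unfolding Ok_def \<phi>_def \<Sigma>_def E_def by auto
      then show "y \<in> T" using yS cA unfolding y T_def \<A>_def \<phi>_def \<Sigma>_def by auto
    qed
  next
    show "T \<subseteq> \<phi> ` E"
    proof
      fix y assume yT: "y \<in> T"
      then have "y \<in> \<Sigma>" using TS by auto
      then obtain f where f: "f \<in> F S X" and y: "y = \<phi> f"
        using bij by (metis bij_betw_imp_surj_on imageE)
      have A: "fst y = Af f" "fst (snd y) = restrict f (Af f)" using y by (auto simp: \<phi>_def)
      have cA: "card (Af f) = k" and ok: "restrict f (Af f) \<in> Ok (Af f)"
        using yT A unfolding T_def \<A>_def by auto
      have "\<forall>j<k. j < N f (z j)" using ok K4[OF f] zmono unfolding Ok_def by auto
      moreover have "\<not> k < N f (z k)" using cA K3[OF f] by simp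
      ultimately have "f \<in> E" using f by (simp add: E_def)
      then show "y \<in> \<phi> ` E" using y by auto
    qed
  qed
  have injE: "inj_on \<phi> E"
    using bij_betw_imp_inj_on[OF bij] by (rule inj_on_subset) (auto simp: E_def)
  have cardE: "card E = card T" using card_image[OF injE] imgE by simp
  have finA: "finite \<A>" using fS by (simp add: \<A>_def)
  have OkA: "of_nat (card (Ok A)) = G" if "A \<in> \<A>" for A
  proof -
    have AS: "A \<subseteq> S" and cA: "card A = k" using that by (auto simp: \<A>_def)
    have fA: "finite A" using AS fS by (rule finite_subset)
    have "card (Ok A) = ord_count F A Xk z"
      unfolding ord_count_alt[OF fA] Ok_def cA by simp
    moreover have "A \<inter> {1..nat (z k)} = {}" using AS SXk by (auto simp: Xk_def zk_def)
    ultimately show ?thesis using IH[OF fA cA] by (simp add: Xk_def zk_def)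
  qed
  have FY: "of_nat (card (F (S - A) Yk)) = poly (p (n - k)) (of_nat x - of_int (z k))"
    if "A \<in> \<A>" for A
  proof -
    have AS: "A \<subseteq> S" and cA: "card A = k" using that by (auto simp: \<A>_def)
    have "of_nat (card (F (S - A) Yk)) = poly (p (card (S - A))) (of_nat (card Yk))"
      by (rule H4[rule_format]) (use fS SXk fX in auto)
    moreover have "card (S - A) = n - k" using AS cA cS fS by (simp add: card_Diff_subset finite_subset)
    moreover have "(of_nat (card Yk) :: rat) = of_nat x - of_int (z k)"
      using zkx zkz by (simp add: Yk_def of_nat_diff flip: zkz)
    ultimately show ?thesis by simp
  qed
  have fin1: "finite (Ok A)" "finite (F (S - A) Yk)" if "A \<in> \<A>" for A
  proof -
    have AS: "A \<subseteq> S" using that by (auto simp: \<A>_def)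
    have fA: "finite A" using AS fS by (rule finite_subset)
    have "A \<inter> Xk = {}" using AS SXk by auto
    then have "finite (F A Xk)" using F_finite[OF BC fA fX(2)] by simp
    then show "finite (Ok A)" unfolding Ok_def by (rule finite_subset[rotated]) auto
    show "finite (F (S - A) Yk)" using F_finite[OF BC _ fX(3)] fS SXk by auto
  qed
  have "card T = (\<Sum>A\<in>\<A>. card (Ok A) * card (F (S - A) Yk))"
    unfolding T_def using finA fin1 by (simp add: card_cartesian_product)
  then have "(of_nat (card T) :: rat) = (\<Sum>A\<in>\<A>. of_nat (card (Ok A)) * of_nat (card (F (S - A) Yk)))"
    by simp
  also have "\<dots> = (\<Sum>A\<in>\<A>. G * poly (p (n - k)) (of_nat x - of_int (z k)))"
    using OkA FY by (intro sum.cong) auto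
  also have "\<dots> = of_nat (card \<A>) * (G * poly (p (n - k)) (of_nat x - of_int (z k)))" by simp
  also have "card \<A> = n choose k" unfolding \<A>_def using n_subsets[OF fS] cS by simp
  finally have "(of_nat (card E) :: rat) = of_nat (n choose k) * G * poly (p (n - k)) (of_nat x - of_int (z k))"
    using cardE by simp
  then show ?thesis unfolding E_def N_def V_def X_def .
qed

lemma comb:
  fixes F :: "nat set \<Rightarrow> nat set \<Rightarrow> (nat \<Rightarrow> nat) set"
    and d :: "rat poly \<Rightarrow> rat poly" and p :: "nat \<Rightarrow> rat poly" and z :: "nat \<Rightarrow> int"
  assumes BC: "binomial_class F" and D: "delta_operator d" and B: "basic_sequence d p"
    and H4: "\<forall>S' X. finite S' \<and> finite X \<and> S' \<inter> X = {} \<longrightarrow>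
           of_nat (card (F S' X)) = poly (p (card S')) (of_nat (card X))"
  shows "\<forall>S x. finite S \<and> card S = n \<and> S \<inter> {1..x} = {} \<and> 0 < x \<and> (\<forall>i<n. 1 \<le> z i \<and> z i \<le> int x)
     \<and> (\<forall>i j. i \<le> j \<and> j < n \<longrightarrow> z i \<le> z j) \<longrightarrow>
     of_nat (ord_count F S {1..x} z) = poly (goncarov_basis d (\<lambda>i. - of_int (z i)) n) 0"
proof (induction n rule: less_induct)
  case (less n)
  define Gf where "Gf k = poly (goncarov_basis d (\<lambda>i. - of_int (z i)) k) 0" for k
  show ?case
  proof (intro allI impI, elim conjE)
    fix S x
    assume fS: "finite S" and cS: "card S = n" and dis: "S \<inter> {1..x} = {}" and x0: "0 < x"
      and zb: "\<forall>i<n. 1 \<le> z i \<and> z i \<le> int x" and mono: "\<forall>i j. i \<le> j \<and> j < n \<longrightarrow> z i \<le> z j"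
    define U where "U = F S {1..x}"
    define P where "P j f = (j < card {s\<in>S. int (final_image f {1..x} s) \<le> z j})" for j f
    define w where "w i = (of_nat x - of_int (z i) :: rat)" for i
    have fU: "finite U" using F_finite[OF BC fS _ dis] by (simp add: U_def)
    have t: "card U = card {f\<in>U. \<forall>j<n. P j f} + (\<Sum>i<n. card {f\<in>U. (\<forall>j<i. P j f) \<and> \<not> P i f})"
      by (rule tele[OF fU])
    have ordc: "ord_count F S {1..x} z = card {f\<in>U. \<forall>j<n. P j f}"
      unfolding ord_count_alt[OF fS] cS U_def P_def by simp
    have Ei: "(of_nat (card {f\<in>U. (\<forall>j<i. P j f) \<and> \<not> P i f}) :: rat)
        = of_nat (n choose i) * Gf i * poly (p (n - i)) (w i)" if "i < n" for i
    proof -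
      have "(of_nat (card {f \<in> F S {1..x}. (\<forall>j<i. j < card {s\<in>S. int (final_image f {1..x} s) \<le> z j})
              \<and> \<not> i < card {s\<in>S. int (final_image f {1..x} s) \<le> z i}}) :: rat)
         = of_nat (n choose i) * Gf i * poly (p (n - i)) (of_nat x - of_int (z i))"
      proof (rule Ek_card[OF BC H4 fS cS dis that zb mono])
        fix A assume fA: "finite A" and cA: "card A = i" and dA: "A \<inter> {1..nat (z i)} = {}"
        have zi: "1 \<le> z i" using zb that by auto
        have "of_nat (ord_count F A {1..nat (z i)} z) = poly (goncarov_basis d (\<lambda>i. - of_int (z i)) i) 0"
          using less.IH[OF that, rule_format, of A "nat (z i)"] fA cA dA zi zb mono that
          by fastforce
        then show "of_nat (ord_count F A {1..nat (z i)} z) = Gf i" by (simp add: Gf_def)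
      qed
      then show ?thesis unfolding U_def P_def w_def .
    qed
    have "(of_nat (card U) :: rat) = poly (p n) (of_nat x)"
      using H4[rule_format, of S "{1..x}"] fS dis cS by (simp add: U_def)
    also have "\<dots> = poly (gT p w n) (of_nat x)
        + (\<Sum>i<n. of_nat (n choose i) * poly (p (n - i)) (w i) * poly (gT p w i) (of_nat x))"
    proof -
      have "p n = gT p w n + (\<Sum>i<n. smult (of_nat (n choose i) * poly (p (n - i)) (w i)) (gT p w i))"
        by (subst gT.simps) simp
      then show ?thesis by (simp add: poly_sum)
    qed
    also have "\<dots> = Gf n + (\<Sum>i<n. of_nat (n choose i) * Gf i * poly (p (n - i)) (w i))"
    proof -
      have g: "poly (gT p w k) (of_nat x) = Gf k" for k
      proof -
        have wd: "w = (\<lambda>i. of_nat x - of_int (z i))" by (simp add: w_def fun_eq_iff)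
        show ?thesis using G_shift[OF D B, of x z k] gb_gT[OF D B, of w] by (simp add: Gf_def wd)
      qed
      show ?thesis by (simp add: g algebra_simps)
    qed
    finally have "(of_nat (card U) :: rat) = Gf n + (\<Sum>i<n. of_nat (n choose i) * Gf i * poly (p (n - i)) (w i))" .
    moreover have "(of_nat (card U) :: rat) = of_nat (ord_count F S {1..x} z)
        + (\<Sum>i<n. of_nat (n choose i) * Gf i * poly (p (n - i)) (w i))"
      using t ordc Ei by (simp add: of_nat_sum)
    ultimately show "of_nat (ord_count F S {1..x} z) = poly (goncarov_basis d (\<lambda>i. - of_int (z i)) n) 0"
      by (simp add: Gf_def)
  qed
qed

theorem mainTheorem18:
  fixes F :: "nat set \<Rightarrow> nat set \<Rightarrow> (nat \<Rightarrow> nat) set"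
    and d :: "rat poly \<Rightarrow> rat poly" and p :: "nat \<Rightarrow> rat poly"
    and x n :: nat and z :: "nat \<Rightarrow> int" and S :: "nat set"
  assumes "binomial_class F"
    and "delta_operator d"
    and "basic_sequence d p"
    and "\<forall>S' X. finite S' \<and> finite X \<and> S' \<inter> X = {} \<longrightarrow>
           of_nat (card (F S' X)) = poly (p (card S')) (of_nat (card X))"
    and "x > 0"
    and "\<forall>i<n. 1 \<le> z i \<and> z i \<le> int x"
    and "\<forall>i j. i \<le> j \<and> j < n \<longrightarrow> z i \<le> z j"
    and "finite S" and "card S = n" and "S \<inter> {1..x} = {}"
  shows "of_nat (ord_count F S {1..x} z)
           = poly (goncarov_basis d (\<lambda>i. of_nat x - of_int (z i)) n) (of_nat x)
       \<and> poly (goncarov_basis d (\<lambda>i. of_nat x - of_int (z i)) n) (of_nat x)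
           = poly (goncarov_basis d (\<lambda>i. - of_int (z i)) n) 0"
proof -
  have "of_nat (ord_count F S {1..x} z) = poly (goncarov_basis d (\<lambda>i. - of_int (z i)) n) 0"
    using comb[OF assms(1-4), of n, rule_format, of S x] assms(5-10) by blast
  moreover have "poly (goncarov_basis d (\<lambda>i. of_nat x - of_int (z i)) n) (of_nat x)
           = poly (goncarov_basis d (\<lambda>i. - of_int (z i)) n) 0"
    by (rule G_shift[OF assms(2,3)])
  ultimately show ?thesis by simp
qed

end
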